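(* Let \(s\ge 0\) be an integer and let \(G\) be a graph with \(\mathrm{surplus}(G)\geq s\). Then deleting any subset of \(s\) vertices from \(G\) results in a graph \(G'\) such that \(LP(G')=LP(G)-\frac{s}{2}\).
   Context: All graphs are finite, undirected and simple. For \(X\subseteq V(G)\), \(N(X)\) is the set of vertices not in \(X\) adjacent to some vertex of \(X\). The surplus of an independent set \(X\) is \(\mathrm{surplus}(X)=|N(X)|-|X|\); the surplus \(\mathrm{surplus}(G)\) of a graph is the minimum surplus over all nonempty independent sets of \(G\). \(LP(G)\) is the optimum value of the linear program: minimize \(\sum_{v\in V(G)}x_v\) subject to \(x_u+x_v\ge 1\) for every edge \(\{u,v\}\in E(G)\) and \(0\le x_v\le 1\) for every \(v\in V(G)\). *)

theory Defs
  imports Main "HOL.Real"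
begin

definition graph :: "'a set \<Rightarrow> ('a \<Rightarrow> 'a \<Rightarrow> bool) \<Rightarrow> bool" where
  "graph V E \<longleftrightarrow> finite V \<and> (\<forall>u v. E u v \<longrightarrow> E v u) \<and> (\<forall>v. \<not> E v v)
      \<and> (\<forall>u v. E u v \<longrightarrow> u \<in> V \<and> v \<in> V)"

definition induced :: "('a \<Rightarrow> 'a \<Rightarrow> bool) \<Rightarrow> 'a set \<Rightarrow> 'a \<Rightarrow> 'a \<Rightarrow> bool" where
  "induced E W = (\<lambda>u v. E u v \<and> u \<in> W \<and> v \<in> W)"

definition independent :: "'a set \<Rightarrow> ('a \<Rightarrow> 'a \<Rightarrow> bool) \<Rightarrow> 'a set \<Rightarrow> bool" where
  "independent V E X \<longleftrightarrow> X \<subseteq> V \<and> (\<forall>u\<in>X. \<forall>v\<in>X. \<not> E u v)"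

definition nbhd :: "'a set \<Rightarrow> ('a \<Rightarrow> 'a \<Rightarrow> bool) \<Rightarrow> 'a set \<Rightarrow> 'a set" where
  "nbhd V E X = {v \<in> V - X. \<exists>u\<in>X. E u v}"

definition surplus_set :: "'a set \<Rightarrow> ('a \<Rightarrow> 'a \<Rightarrow> bool) \<Rightarrow> 'a set \<Rightarrow> int" where
  "surplus_set V E X = int (card (nbhd V E X)) - int (card X)"

definition surplus :: "'a set \<Rightarrow> ('a \<Rightarrow> 'a \<Rightarrow> bool) \<Rightarrow> int" where
  "surplus V E = Min {surplus_set V E X | X. X \<noteq> {} \<and> independent V E X}"

definition lp_feasible :: "'a set \<Rightarrow> ('a \<Rightarrow> 'a \<Rightarrow> bool) \<Rightarrow> ('a \<Rightarrow> real) \<Rightarrow> bool" where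
  "lp_feasible V E x \<longleftrightarrow> (\<forall>v\<in>V. 0 \<le> x v \<and> x v \<le> 1)
      \<and> (\<forall>u\<in>V. \<forall>v\<in>V. E u v \<longrightarrow> x u + x v \<ge> 1)"

text \<open>Optimum value of the fractional vertex cover LP (a minimum, which is attained).\<close>
definition LP :: "'a set \<Rightarrow> ('a \<Rightarrow> 'a \<Rightarrow> bool) \<Rightarrow> real" where
  "LP V E = Inf {(\<Sum>v\<in>V. x v) | x. lp_feasible V E x}"

end

theory Submission
  imports Defs
begin

lemma layer:
  fixes y :: "'a \<Rightarrow> real"
  assumes fin: "finite V"
    and cond: "\<And>t. t > 0 \<Longrightarrow> card {v\<in>V. y v \<le> -t} \<le> card {v\<in>V. y v \<ge> t}"
  shows "0 \<le> sum y V"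
  using cond
proof (induction "card ((\<lambda>v. \<bar>y v\<bar>) ` V - {0})" arbitrary: y rule: less_induct)
  case less
  define A where "A = (\<lambda>v. \<bar>y v\<bar>) ` V - {0}"
  have finA: "finite A" using fin unfolding A_def by auto
  show ?case
  proof (cases "A = {}")
    case True
    then have "\<forall>v\<in>V. y v = 0" unfolding A_def by auto
    then show ?thesis by simp
  next
    case False
    define M where "M = Max A"
    have MA: "M \<in> A" using False finA unfolding M_def by simp
    have Mge: "\<And>v. v \<in> V \<Longrightarrow> \<bar>y v\<bar> \<le> M"
    proof -
      fix v assume v: "v \<in> V"
      show "\<bar>y v\<bar> \<le> M"
      proof (cases "y v = 0")
        case True then show ?thesis using MA unfolding A_def by auto
      next
        case False then have "\<bar>y v\<bar> \<in> A" using v unfolding A_def by auto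
        then show ?thesis unfolding M_def using finA by simp
      qed
    qed
    have Mpos: "M > 0" using MA unfolding A_def by auto
    define m where "m = Max (insert 0 (A - {M}))"
    have m0: "m \<ge> 0" unfolding m_def using finA by simp
    have mlt: "m < M"
    proof -
      have "\<forall>a\<in>insert 0 (A - {M}). a < M"
        using Mpos finA unfolding M_def
        by (metis Diff_iff Max_ge insertE order_le_neq_trans singletonI)
      then show ?thesis unfolding m_def using finA by simp
    qed
    have dich: "\<And>v. v \<in> V \<Longrightarrow> \<bar>y v\<bar> = M \<or> \<bar>y v\<bar> \<le> m"
    proof -
      fix v assume v: "v \<in> V"
      show "\<bar>y v\<bar> = M \<or> \<bar>y v\<bar> \<le> m"
      proof (cases "y v = 0 \<or> \<bar>y v\<bar> = M")
        case True then show ?thesis using m0 by auto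
      next
        case False
        then have "\<bar>y v\<bar> \<in> insert 0 (A - {M})" using v unfolding A_def by auto
        then show ?thesis unfolding m_def using finA by simp
      qed
    qed
    define y' where "y' = (\<lambda>v. max (-m) (min m (y v)))"
    have cond': "card {v\<in>V. y' v \<le> -t} \<le> card {v\<in>V. y' v \<ge> t}" if t: "t > 0" for t
    proof (cases "t \<le> m")
      case True
      have "{v\<in>V. y' v \<le> -t} = {v\<in>V. y v \<le> -t}" using True t unfolding y'_def by auto
      moreover have "{v\<in>V. y' v \<ge> t} = {v\<in>V. y v \<ge> t}" using True t unfolding y'_def by auto
      ultimately show ?thesis using less.prems t by simp
    next
      case False
      have e: "{v\<in>V. y' v \<le> -t} = {}" using False t unfolding y'_def by auto
      show ?thesis unfolding e by simp
    qed
    have sub: "(\<lambda>v. \<bar>y' v\<bar>) ` V - {0} \<subset> A"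
    proof
      show "(\<lambda>v. \<bar>y' v\<bar>) ` V - {0} \<subseteq> A"
      proof
        fix a assume "a \<in> (\<lambda>v. \<bar>y' v\<bar>) ` V - {0}"
        then obtain v where v: "v \<in> V" "a = \<bar>y' v\<bar>" "a \<noteq> 0" by auto
        show "a \<in> A"
        proof (cases "\<bar>y v\<bar> = M")
          case True
          then have "a = m" using v m0 mlt unfolding y'_def by auto
          moreover have "m \<in> insert 0 (A - {M})" unfolding m_def using finA by (intro Max_in) auto
          ultimately show ?thesis using v by auto
        next
          case False
          then have "\<bar>y v\<bar> \<le> m" using dich v by auto
          then have "a = \<bar>y v\<bar>" using v unfolding y'_def by auto
          then show ?thesis using v unfolding A_def by auto
        qed
      qed
      show "(\<lambda>v. \<bar>y' v\<bar>) ` V - {0} \<noteq> A"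
      proof
        assume eq: "(\<lambda>v. \<bar>y' v\<bar>) ` V - {0} = A"
        then obtain v where v: "v \<in> V" "M = \<bar>y' v\<bar>" using MA by auto
        have "\<bar>y' v\<bar> \<le> m" unfolding y'_def using m0 by auto
        then show False using v mlt by simp
      qed
    qed
    have "card ((\<lambda>v. \<bar>y' v\<bar>) ` V - {0}) < card ((\<lambda>v. \<bar>y v\<bar>) ` V - {0})"
      using psubset_card_mono[OF finA sub] unfolding A_def .
    then have IH: "0 \<le> sum y' V" using less.hyps cond' by blast
    have diff: "y v - y' v = (M - m) * (of_bool (y v = M) - of_bool (y v = -M))" if v: "v \<in> V" for v
    proof -
      have "\<bar>y v\<bar> = M \<or> \<bar>y v\<bar> \<le> m" using dich v .
      then show ?thesis using m0 mlt unfolding y'_def by (auto simp: abs_if split: if_splits)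
    qed
    have "sum y V - sum y' V = (\<Sum>v\<in>V. (M - m) * (of_bool (y v = M) - of_bool (y v = -M)))"
      using diff by (simp add: sum_subtractf[symmetric])
    also have "\<dots> = (M - m) * (real (card (V \<inter> {v. y v = M})) - real (card (V \<inter> {v. y v = -M})))"
      using fin by (simp add: sum_distrib_left[symmetric] sum_subtractf)
    also have "\<dots> \<ge> 0"
    proof -
      have "V \<inter> {v. y v = M} = {v\<in>V. y v \<ge> M}" using Mge by force
      moreover have "V \<inter> {v. y v = -M} = {v\<in>V. y v \<le> -M}" using Mge by force
      ultimately have "card (V \<inter> {v. y v = -M}) \<le> card (V \<inter> {v. y v = M})"
        using less.prems[OF Mpos] by simp
      then show ?thesis using mlt by simp
    qed
    finally show ?thesis using IH by linarith
  qed
qed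

lemma LP_half:
  assumes fin: "finite V"
    and hall: "\<And>X. X \<noteq> {} \<Longrightarrow> independent V E X \<Longrightarrow> card X \<le> card (nbhd V E X)"
  shows "LP V E = real (card V) / 2"
  unfolding LP_def
proof (rule cInf_eq_minimum)
  show "real (card V) / 2 \<in> {(\<Sum>v\<in>V. x v) | x. lp_feasible V E x}"
  proof -
    have "lp_feasible V E (\<lambda>_. 1/2)" unfolding lp_feasible_def by auto
    moreover have "(\<Sum>v\<in>V. (\<lambda>_. 1/2::real) v) = real (card V) / 2" by simp
    ultimately have "real (card V) / 2 = (\<Sum>v\<in>V. (\<lambda>_. 1/2::real) v) \<and> lp_feasible V E (\<lambda>_. 1/2)" by simp
    then show ?thesis by (intro CollectI) (rule exI)
  qed
next
  fix z assume "z \<in> {(\<Sum>v\<in>V. x v) | x. lp_feasible V E x}"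
  then obtain x where z: "z = (\<Sum>v\<in>V. x v)" and feas: "lp_feasible V E x" by blast
  define y where "y = (\<lambda>v. x v - 1/2)"
  have "0 \<le> sum y V"
  proof (rule layer[OF fin])
    fix t :: real assume t: "t > 0"
    define L where "L = {v\<in>V. y v \<le> -t}"
    show "card {v\<in>V. y v \<le> -t} \<le> card {v\<in>V. y v \<ge> t}"
    proof (cases "L = {}")
      case True then have e: "{v\<in>V. y v \<le> -t} = {}" unfolding L_def by simp
      show ?thesis unfolding e by simp
    next
      case False
      have ind: "independent V E L"
        unfolding independent_def L_def
      proof (intro conjI ballI)
        fix u v assume u: "u \<in> {v\<in>V. y v \<le> -t}" and v: "v \<in> {v\<in>V. y v \<le> -t}"
        show "\<not> E u v"
        proof
          assume "E u v"
          then have "x u + x v \<ge> 1" using feas u v unfolding lp_feasible_def by auto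
          then show False using u v t unfolding y_def by auto
        qed
      qed auto
      have "nbhd V E L \<subseteq> {v\<in>V. y v \<ge> t}"
      proof
        fix w assume "w \<in> nbhd V E L"
        then obtain u where w: "w \<in> V" and u: "u \<in> L" and e: "E u w" unfolding nbhd_def by auto
        have "x u + x w \<ge> 1" using feas u w e unfolding lp_feasible_def L_def by auto
        then show "w \<in> {v\<in>V. y v \<ge> t}" using u w unfolding L_def y_def by auto
      qed
      then have "card (nbhd V E L) \<le> card {v\<in>V. y v \<ge> t}" using fin by (intro card_mono) auto
      then show ?thesis using hall[OF False ind] unfolding L_def by simp
    qed
  qed
  moreover have "sum y V = z - real (card V) / 2"
    unfolding y_def z by (simp add: sum_subtractf)
  ultimately show "real (card V) / 2 \<le> z" by simp
qed

lemma surplus_le: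
  assumes fin: "finite V" and X: "X \<noteq> {}" "independent V E X"
  shows "surplus V E \<le> surplus_set V E X"
proof -
  have "{surplus_set V E X | X. X \<noteq> {} \<and> independent V E X} \<subseteq> surplus_set V E ` Pow V"
    unfolding independent_def by auto
  then have "finite {surplus_set V E X | X. X \<noteq> {} \<and> independent V E X}"
    using fin by (meson finite_Pow_iff finite_imageI finite_subset)
  then show ?thesis unfolding surplus_def using X by (intro Min_le) auto
qed

theorem lemma3:
  fixes V :: "'a set" and E :: "'a \<Rightarrow> 'a \<Rightarrow> bool" and s :: nat and S :: "'a set"
  assumes "graph V E"
    and "surplus V E \<ge> int s"
    and "S \<subseteq> V" and "card S = s"
  shows "LP (V - S) (induced E (V - S)) = LP V E - real s / 2"
proof -
  have fin: "finite V" using assms(1) unfolding graph_def by auto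
  have key: "card X + s \<le> card (nbhd V E X)" if "X \<noteq> {}" "independent V E X" for X
    using surplus_le[OF fin that] assms(2) unfolding surplus_set_def by linarith
  have "LP V E = real (card V) / 2"
  proof (rule LP_half[OF fin])
    fix X assume "X \<noteq> {}" "independent V E X"
    from key[OF this] show "card X \<le> card (nbhd V E X)" by simp
  qed
  moreover have "LP (V - S) (induced E (V - S)) = real (card (V - S)) / 2"
  proof (rule LP_half)
    show "finite (V - S)" using fin by auto
  next
    fix X assume X: "X \<noteq> {}" "independent (V - S) (induced E (V - S)) X"
    have XS: "X \<subseteq> V - S" using X unfolding independent_def by auto
    have indX: "independent V E X" using X XS unfolding independent_def induced_def by blast
    have "nbhd V E X - S \<subseteq> nbhd (V - S) (induced E (V - S)) X"
      using XS unfolding nbhd_def induced_def by auto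
    then have "card (nbhd V E X - S) \<le> card (nbhd (V - S) (induced E (V - S)) X)"
      using fin by (intro card_mono) (auto simp: nbhd_def)
    moreover have "card (nbhd V E X) - card S \<le> card (nbhd V E X - S)"
      by (rule diff_card_le_card_Diff) (use fin assms(3) in \<open>auto intro: finite_subset\<close>)
    moreover have "card X + s \<le> card (nbhd V E X)" using key X(1) indX .
    ultimately show "card X \<le> card (nbhd (V - S) (induced E (V - S)) X)" using assms(4) by linarith
  qed
  moreover have "real (card (V - S)) = real (card V) - real s"
  proof -
    have fS: "finite S" using assms(3) fin by (rule finite_subset)
    have "card S \<le> card V" using assms(3) fin by (rule card_mono[rotated])
    moreover have "card (V - S) = card V - card S" using fS assms(3) by (rule card_Diff_subset)
    ultimately show ?thesis using assms(4) by (simp add: of_nat_diff)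
  qed
  ultimately show ?thesis by simp
qed

end
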